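(* Let $f:\mathbb{R}^n\times\mathbb{R}\to\mathbb{R}^n$ be $C^1$, let $\lambda_-<\lambda_+$, let $\Lambda$ be a parameter shift from $\lambda_-$ to $\lambda_+$, and let $r>0$. Let $\Phi$ be the solution cocycle of $\dot x=f(x,\Lambda(rt))$ and $\phi_-$ the flow of the past limit system $\dot x=f(x,\lambda_-)$. Suppose that $A_-$ is an asymptotically stable attractor for $\phi_-$. Then there is a local pullback attractor $\mathcal{A}$ of $\dot x=f(x,\Lambda(rt))$ whose upper backward limit $A_{-\infty}$ is contained in $A_-$.
   Context: A parameter shift from $\lambda_-$ to $\lambda_+$ is a smooth $\Lambda:\mathbb{R}\to(\lambda_-,\lambda_+)$ with $\lim_{\tau\to\pm\infty}\Lambda(\tau)=\lambda_\pm$ and $\lim_{\tau\to\pm\infty}\Lambda'(\tau)=0$. Solutions are assumed to exist for all time; $\Phi(t,s,x_0)$ is the value at time $t$ of the solution with $x(s)=x_0$. For nonempty compact $X,Y\subset\mathbb{R}^n$, $d(X,Y)=\sup_{x\in X}\inf_{y\in Y}\|x-y\|$, and $\mathcal{N}_\eta(M)=\{x: d(x,M)<\eta\}$. A compact $\phi_-$-invariant set $M$ is asymptotically stable if (i) for every $\epsilon>0$ there is $\delta>0$ with $d(\phi_-(t,y),M)<\epsilon$ for all $t>0$ and $y\in\mathcal{N}_\delta(M)$, and (ii) there is $\eta>0$ with $\lim_{t\to\infty}d(\phi_-(t,y),M)=0$ for all $y\in\mathcal{N}_\eta(M)$. A nonautonomous set is a family $\mathcal{A}=\{A_t\}_{t\in\mathbb{R}}$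 of nonempty subsets of $\mathbb{R}^n$; it is invariant if $\Phi(t,s,A_s)=A_t$ for all $t,s$, compact if each $A_t$ is compact; its upper backward limit is $A_{-\infty}=\bigcap_{\tau>0}\overline{\bigcup_{t\le-\tau}A_t}$. A (local) pullback attractor is a compact invariant nonautonomous set $\mathcal{A}$ for which there exists a bounded open set $U$ containing $A_{-\infty}$ such that $\lim_{s\to-\infty}d(\Phi(t,s,U),A_t)=0$ for all $t\in\mathbb{R}$. *)

theory Defs
  imports "HOL-Analysis.Analysis"
begin

definition C1_fun2 :: "('a::euclidean_space \<Rightarrow> real \<Rightarrow> 'a) \<Rightarrow> bool" where
  "C1_fun2 f \<longleftrightarrow> (\<exists>f' :: 'a \<times> real \<Rightarrow> ('a \<times> real) \<Rightarrow>\<^sub>L 'a.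
      (\<forall>p. ((\<lambda>q. f (fst q) (snd q)) has_derivative blinfun_apply (f' p)) (at p))
      \<and> continuous_on UNIV f')"

definition smooth_real :: "(real \<Rightarrow> real) \<Rightarrow> bool" where
  "smooth_real g \<longleftrightarrow> (\<forall>k::nat. \<forall>t. ((deriv ^^ k) g) differentiable (at t))"

definition parameter_shift :: "(real \<Rightarrow> real) \<Rightarrow> real \<Rightarrow> real \<Rightarrow> bool" where
  "parameter_shift \<Lambda> lm lp \<longleftrightarrow>
     smooth_real \<Lambda> \<and> (\<forall>t. lm < \<Lambda> t \<and> \<Lambda> t < lp) \<and>
     (\<Lambda> \<longlongrightarrow> lm) at_bot \<and> (\<Lambda> \<longlongrightarrow> lp) at_top \<and>
     (deriv \<Lambda> \<longlongrightarrow> 0) at_bot \<and> (deriv \<Lambda> \<longlongrightarrow> 0) at_top"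

text \<open>Phi t s x0 = value at time t of the solution with x(s) = x0 (global existence assumed).\<close>
definition is_solution_cocycle :: "('a::euclidean_space \<Rightarrow> real \<Rightarrow> 'a) \<Rightarrow> (real \<Rightarrow> real) \<Rightarrow> real
     \<Rightarrow> (real \<Rightarrow> real \<Rightarrow> 'a \<Rightarrow> 'a) \<Rightarrow> bool" where
  "is_solution_cocycle f \<Lambda> r \<Phi> \<longleftrightarrow>
     (\<forall>s x0. \<Phi> s s x0 = x0 \<and>
        (\<forall>t. ((\<lambda>\<tau>. \<Phi> \<tau> s x0) has_vector_derivative f (\<Phi> t s x0) (\<Lambda> (r * t))) (at t)))"

definition is_autonomous_flow :: "('a::euclidean_space \<Rightarrow> real \<Rightarrow> 'a) \<Rightarrow> real
     \<Rightarrow> (real \<Rightarrow> 'a \<Rightarrow> 'a) \<Rightarrow> bool" where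
  "is_autonomous_flow f lam \<phi> \<longleftrightarrow>
     (\<forall>x0. \<phi> 0 x0 = x0 \<and>
        (\<forall>t. ((\<lambda>\<tau>. \<phi> \<tau> x0) has_vector_derivative f (\<phi> t x0) lam) (at t)))"

definition setdist_d :: "'a::metric_space set \<Rightarrow> 'a set \<Rightarrow> real" where
  "setdist_d X Y = (SUP x\<in>X. infdist x Y)"

definition nbhd :: "real \<Rightarrow> 'a::metric_space set \<Rightarrow> 'a set" where
  "nbhd \<eta> M = {x. infdist x M < \<eta>}"

definition asymptotically_stable :: "(real \<Rightarrow> 'a::metric_space \<Rightarrow> 'a) \<Rightarrow> 'a set \<Rightarrow> bool" where
  "asymptotically_stable \<phi> M \<longleftrightarrow>
     M \<noteq> {} \<and> compact M \<and> (\<forall>t. \<phi> t ` M = M) \<and>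
     (\<forall>\<epsilon>>0. \<exists>\<delta>>0. \<forall>t>0. \<forall>y\<in>nbhd \<delta> M. setdist_d {\<phi> t y} M < \<epsilon>) \<and>
     (\<exists>\<eta>>0. \<forall>y\<in>nbhd \<eta> M. ((\<lambda>t. setdist_d {\<phi> t y} M) \<longlongrightarrow> 0) at_top)"

definition upper_backward_limit :: "(real \<Rightarrow> 'a::topological_space set) \<Rightarrow> 'a set" where
  "upper_backward_limit A = (\<Inter>\<tau>\<in>{0<..}. closure (\<Union>t\<in>{..-\<tau>}. A t))"

definition local_pullback_attractor :: "(real \<Rightarrow> real \<Rightarrow> 'a::metric_space \<Rightarrow> 'a) \<Rightarrow> (real \<Rightarrow> 'a set) \<Rightarrow> bool" where
  "local_pullback_attractor \<Phi> A \<longleftrightarrow>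
     (\<forall>t. A t \<noteq> {} \<and> compact (A t)) \<and>
     (\<forall>t s. \<Phi> t s ` A s = A t) \<and>
     (\<exists>U. bounded U \<and> open U \<and> upper_backward_limit A \<subseteq> U \<and>
        (\<forall>t. ((\<lambda>s. setdist_d (\<Phi> t s ` U) (A t)) \<longlongrightarrow> 0) at_bot))"

end

theory Submission
  imports Defs
begin


lemma gronwall_core:
  fixes g G :: "real \<Rightarrow> 'a::real_inner"
  assumes ab: "a \<le> b" and L: "L \<ge> 0" and e: "e \<ge> 0"
    and der: "\<And>\<sigma>. (g has_vector_derivative G \<sigma>) (at \<sigma>)"
    and bnd: "\<And>\<sigma>. a < \<sigma> \<Longrightarrow> \<sigma> < b \<Longrightarrow> norm (G \<sigma>) \<le> L * norm (g \<sigma>) + e"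
  shows "norm (g b)^2 \<le> exp ((2*L+1)*(b-a)) * (norm (g a)^2 + e^2)"
proof -
  define k where "k = 2*L+1"
  have k1: "k \<ge> 1" using L by (simp add: k_def)
  define w where "w \<sigma> = exp (-(k*\<sigma>)) * (inner (g \<sigma>) (g \<sigma>) + e^2)" for \<sigma>
  have dw: "(w has_real_derivative (exp (-(k*\<sigma>)) * (-k) * (inner (g \<sigma>) (g \<sigma>) + e^2)
      + exp (-(k*\<sigma>)) * (2 * inner (g \<sigma>) (G \<sigma>)))) (at \<sigma>)" for \<sigma>
  proof -
    have gd: "(g has_derivative (\<lambda>h. h *\<^sub>R G \<sigma>)) (at \<sigma>)"
      using der[of \<sigma>] by (simp add: has_vector_derivative_def)
    have "((\<lambda>s. inner (g s) (g s)) has_derivative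
        (\<lambda>h. inner (g \<sigma>) (h *\<^sub>R G \<sigma>) + inner (h *\<^sub>R G \<sigma>) (g \<sigma>))) (at \<sigma>)"
      by (rule has_derivative_inner[OF gd gd])
    then have "((\<lambda>s. inner (g s) (g s)) has_real_derivative 2 * inner (g \<sigma>) (G \<sigma>)) (at \<sigma>)"
      unfolding has_field_derivative_def
      by (rule has_derivative_eq_rhs) (auto simp: inner_commute algebra_simps)
    then show ?thesis unfolding w_def
      by (auto intro!: derivative_eq_intros)
  qed
  have "w b \<le> w a"
  proof (rule DERIV_nonpos_imp_decreasing_open[OF ab])
    fix x assume x: "a < x" "x < b"
    have "inner (g x) (G x) \<le> norm (g x) * norm (G x)" by (rule norm_cauchy_schwarz)
    also have "\<dots> \<le> norm (g x) * (L * norm (g x) + e)"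
      by (rule mult_left_mono[OF bnd[OF x]]) simp
    finally have i: "inner (g x) (G x) \<le> L * norm (g x)^2 + norm (g x) * e"
      by (simp add: algebra_simps power2_eq_square)
    have n2: "2 * (norm (g x) * e) \<le> norm (g x)^2 + e^2"
      using zero_le_power2[of "norm (g x) - e"] by (simp add: power2_diff)
    have ii: "inner (g x) (g x) = norm (g x)^2" by (simp add: power2_norm_eq_inner)
    have "2 * inner (g x) (G x) \<le> 2 * L * norm (g x)^2 + norm (g x)^2 + e^2"
      using i n2 by linarith
    also have "\<dots> \<le> k * (norm (g x)^2 + e^2)"
      unfolding k_def using L e by (simp add: algebra_simps)
    finally have "2 * inner (g x) (G x) \<le> k * (inner (g x) (g x) + e^2)" using ii by simp
    then have "exp (-(k*x)) * (-k) * (inner (g x) (g x) + e^2)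
      + exp (-(k*x)) * (2 * inner (g x) (G x)) \<le> 0"
    proof -
      assume h: "2 * inner (g x) (G x) \<le> k * (inner (g x) (g x) + e^2)"
      have "exp (-(k*x)) * (2 * inner (g x) (G x)) \<le> exp (-(k*x)) * (k * (inner (g x) (g x) + e^2))"
        by (rule mult_left_mono[OF h]) simp
      then show ?thesis by (simp add: algebra_simps)
    qed
    then show "\<exists>y. (w has_real_derivative y) (at x) \<and> y \<le> 0" using dw by blast
  next
    show "continuous_on {a..b} w"
      using dw by (meson DERIV_isCont continuous_at_imp_continuous_on)
  qed
  then have "exp (-(k*b)) * (norm (g b)^2 + e^2) \<le> exp (-(k*a)) * (norm (g a)^2 + e^2)"
    unfolding w_def by (simp add: power2_norm_eq_inner)
  then have "exp (k*b) * (exp (-(k*b)) * (norm (g b)^2 + e^2)) \<le> exp (k*b) * (exp (-(k*a)) * (norm (g a)^2 + e^2))"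
    by (simp add: mult_left_mono)
  then have "norm (g b)^2 + e^2 \<le> exp (k*(b-a)) * (norm (g a)^2 + e^2)"
    by (simp add: mult.assoc[symmetric] exp_add[symmetric] right_diff_distrib)
  then show ?thesis unfolding k_def by (smt (verit) zero_le_power2)
qed

lemma master_fwd:
  fixes x y X Y :: "real \<Rightarrow> 'a::real_inner"
  assumes ab: "a \<le> b" and L: "L \<ge> 0" and e: "e \<ge> 0"
    and dx: "\<And>\<sigma>. (x has_vector_derivative X \<sigma>) (at \<sigma>)"
    and dy: "\<And>\<sigma>. (y has_vector_derivative Y \<sigma>) (at \<sigma>)"
    and cond: "\<And>\<sigma>. a \<le> \<sigma> \<Longrightarrow> \<sigma> \<le> b \<Longrightarrow> norm (x \<sigma> - y \<sigma>) \<le> 1 \<Longrightarrow>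
        norm (X \<sigma> - Y \<sigma>) \<le> L * norm (x \<sigma> - y \<sigma>) + e"
    and small: "exp ((2*L+1)*(b-a)) * (norm (x a - y a)^2 + e^2) < 1"
    and tau: "a \<le> \<tau>" "\<tau> \<le> b"
  shows "norm (x \<tau> - y \<tau>)^2 \<le> exp ((2*L+1)*(\<tau>-a)) * (norm (x a - y a)^2 + e^2)"
proof -
  define g where "g \<sigma> = x \<sigma> - y \<sigma>" for \<sigma>
  have dg: "(g has_vector_derivative (X \<sigma> - Y \<sigma>)) (at \<sigma>)" for \<sigma>
    unfolding g_def by (intro derivative_intros dx dy)
  have contg: "continuous_on UNIV g"
    using dg by (meson continuous_at_imp_continuous_on has_vector_derivative_continuous)
  have mono_k: "exp ((2*L+1)*(t-a)) * (norm (x a - y a)^2 + e^2) \<le> exp ((2*L+1)*(b-a)) * (norm (x a - y a)^2 + e^2)"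
    if "t \<le> b" for t
    using that L by (intro mult_right_mono) auto
  have lt1: "norm (g t) < 1" if t: "a \<le> t" "t \<le> b" for t
  proof (rule ccontr)
    assume nt: "\<not> norm (g t) < 1"
    define S where "S = {a..b} \<inter> {t. 1 \<le> norm (g t)}"
    have "closed {t. 1 \<le> norm (g t)}"
      by (rule closed_Collect_le) (auto intro!: continuous_intros contg)
    then have cS: "closed S" unfolding S_def by (intro closed_Int) auto
    have neS: "S \<noteq> {}" using t nt unfolding S_def by auto
    have bS: "bdd_below S" unfolding S_def by (rule bdd_belowI[of _ a]) auto
    define t0 where "t0 = Inf S"
    have t0S: "t0 \<in> S" unfolding t0_def by (rule closed_contains_Inf[OF neS bS cS])
    then have t0: "a \<le> t0" "t0 \<le> b" "1 \<le> norm (g t0)" unfolding S_def by auto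
    have "norm (g t0)^2 \<le> exp ((2*L+1)*(t0-a)) * (norm (g a)^2 + e^2)"
    proof (rule gronwall_core[OF t0(1) L e dg])
      fix \<sigma> assume s: "a < \<sigma>" "\<sigma> < t0"
      have "\<sigma> \<notin> S" using s cInf_lower[OF _ bS, of \<sigma>] unfolding t0_def by force
      then have "norm (g \<sigma>) \<le> 1" using s t0 unfolding S_def by auto
      then show "norm (X \<sigma> - Y \<sigma>) \<le> L * norm (g \<sigma>) + e"
        using cond[of \<sigma>] s t0 unfolding g_def by auto
    qed
    also have "\<dots> < 1" using mono_k[OF t0(2)] small unfolding g_def by linarith
    finally have "norm (g t0)^2 < 1" .
    then have "norm (g t0) < 1" by (simp add: power_less_one_iff abs_square_less_1)
    then show False using t0 by linarith
  qed
  have "norm (g \<tau>)^2 \<le> exp ((2*L+1)*(\<tau>-a)) * (norm (g a)^2 + e^2)"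
  proof (rule gronwall_core[OF tau(1) L e dg])
    fix \<sigma> assume s: "a < \<sigma>" "\<sigma> < \<tau>"
    then show "norm (X \<sigma> - Y \<sigma>) \<le> L * norm (g \<sigma>) + e"
      using cond[of \<sigma>] lt1[of \<sigma>] tau unfolding g_def by auto
  qed
  then show ?thesis unfolding g_def .
qed

lemma master_bwd:
  fixes x y X Y :: "real \<Rightarrow> 'a::real_inner"
  assumes ab: "b \<le> a" and L: "L \<ge> 0" and e: "e \<ge> 0"
    and dx: "\<And>\<sigma>. (x has_vector_derivative X \<sigma>) (at \<sigma>)"
    and dy: "\<And>\<sigma>. (y has_vector_derivative Y \<sigma>) (at \<sigma>)"
    and cond: "\<And>\<sigma>. b \<le> \<sigma> \<Longrightarrow> \<sigma> \<le> a \<Longrightarrow> norm (x \<sigma> - y \<sigma>) \<le> 1 \<Longrightarrow>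
        norm (X \<sigma> - Y \<sigma>) \<le> L * norm (x \<sigma> - y \<sigma>) + e"
    and small: "exp ((2*L+1)*(a-b)) * (norm (x a - y a)^2 + e^2) < 1"
    and tau: "b \<le> \<tau>" "\<tau> \<le> a"
  shows "norm (x \<tau> - y \<tau>)^2 \<le> exp ((2*L+1)*(a-\<tau>)) * (norm (x a - y a)^2 + e^2)"
proof -
  have d: "((f \<circ> uminus) has_vector_derivative (- F (- \<sigma>))) (at \<sigma>)"
    if "\<And>\<sigma>. (f has_vector_derivative F \<sigma>) (at \<sigma>)" for f F and \<sigma> :: real
  proof -
    have "(uminus has_vector_derivative -1) (at \<sigma>)"
      using has_vector_derivative_minus[OF has_vector_derivative_id[of "at \<sigma>"]] by simp
    then show ?thesis using vector_diff_chain_at[of uminus "-1" \<sigma> f "F (- \<sigma>)"] that by simp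
  qed
  have "norm ((x \<circ> uminus) (-\<tau>) - (y \<circ> uminus) (-\<tau>))^2 \<le> exp ((2*L+1)*(-\<tau>-(-a)))
      * (norm ((x \<circ> uminus) (-a) - (y \<circ> uminus) (-a))^2 + e^2)"
  proof (rule master_fwd[OF _ L e d[OF dx] d[OF dy]])
    show "- a \<le> - b" using ab by simp
    fix \<sigma> assume "- a \<le> \<sigma>" "\<sigma> \<le> - b" "norm ((x \<circ> uminus) \<sigma> - (y \<circ> uminus) \<sigma>) \<le> 1"
    then show "norm (- X (- \<sigma>) - - Y (- \<sigma>)) \<le> L * norm ((x \<circ> uminus) \<sigma> - (y \<circ> uminus) \<sigma>) + e"
      using cond[of "-\<sigma>"] by (simp add: norm_minus_commute)
  qed (use small tau in auto)
  then show ?thesis by simp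
qed

definition sol :: "('a::euclidean_space \<Rightarrow> real \<Rightarrow> 'a) \<Rightarrow> (real \<Rightarrow> 'a) \<Rightarrow> (real \<Rightarrow> real) \<Rightarrow> bool" where
  "sol f x p \<longleftrightarrow> (\<forall>\<sigma>. (x has_vector_derivative f (x \<sigma>) (p \<sigma>)) (at \<sigma>))"

lemma C1_lip:
  fixes f :: "'a::euclidean_space \<Rightarrow> real \<Rightarrow> 'a"
  assumes "C1_fun2 f"
  obtains B where "B > 0" "\<And>z w l m. norm z \<le> R \<Longrightarrow> norm w \<le> R \<Longrightarrow> l \<in> {lm..lp} \<Longrightarrow> m \<in> {lm..lp}
      \<Longrightarrow> norm (f z l - f w m) \<le> B * (norm (z - w) + \<bar>l - m\<bar>)"
proof -
  obtain f' :: "'a \<times> real \<Rightarrow> ('a \<times> real) \<Rightarrow>\<^sub>L 'a" where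
    fd: "\<And>p. ((\<lambda>q. f (fst q) (snd q)) has_derivative blinfun_apply (f' p)) (at p)"
    and fc: "continuous_on UNIV f'"
    using assms unfolding C1_fun2_def by blast
  define S where "S = cball (0::'a) R \<times> {lm..lp}"
  have cS: "compact S" unfolding S_def by (intro compact_Times) auto
  have cvS: "convex S" unfolding S_def by (intro convex_Times) auto
  have "compact (f' ` S)" by (rule compact_continuous_image[OF continuous_on_subset[OF fc] cS]) auto
  then obtain B0 where B0: "\<And>p. p \<in> S \<Longrightarrow> norm (f' p) \<le> B0"
    using compact_imp_bounded bounded_iff by (metis image_eqI)
  define B where "B = max B0 1"
  have "B > 0" unfolding B_def by simp
  moreover have "norm (f z l - f w m) \<le> B * (norm (z - w) + \<bar>l - m\<bar>)"
    if "norm z \<le> R" "norm w \<le> R" "l \<in> {lm..lp}" "m \<in> {lm..lp}" for z w l m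
  proof -
    have zS: "(z, l) \<in> S" "(w, m) \<in> S" using that unfolding S_def by auto
    have "norm ((\<lambda>q. f (fst q) (snd q)) (z, l) - (\<lambda>q. f (fst q) (snd q)) (w, m)) \<le> B * norm ((z, l) - (w, m))"
    proof (rule differentiable_bound[OF cvS _ _ zS])
      fix p assume "p \<in> S"
      show "((\<lambda>q. f (fst q) (snd q)) has_derivative blinfun_apply (f' p)) (at p within S)"
        using fd has_derivative_at_withinI by blast
      show "onorm (blinfun_apply (f' p)) \<le> B"
        using B0[OF \<open>p \<in> S\<close>] unfolding B_def by (simp add: norm_blinfun.rep_eq[symmetric])
    qed
    also have "\<dots> \<le> B * (norm (z - w) + \<bar>l - m\<bar>)"
      using norm_Pair_le[of "z - w" "l - m"] \<open>B > 0\<close> by (intro mult_left_mono) auto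
    finally show ?thesis by simp
  qed
  ultimately show ?thesis using that by blast
qed

definition cmp_ok :: "('a::euclidean_space \<Rightarrow> real \<Rightarrow> 'a) \<Rightarrow> real \<Rightarrow> real \<Rightarrow> real \<Rightarrow> real \<Rightarrow> bool" where
  "cmp_ok f lm lp R B \<longleftrightarrow> B > 0 \<and> (\<forall>x y p q a b d \<tau>. sol f x p \<longrightarrow> sol f y q \<longrightarrow> (\<forall>\<sigma>. p \<sigma> \<in> {lm..lp}) \<longrightarrow> (\<forall>\<sigma>. q \<sigma> \<in> {lm..lp})
      \<longrightarrow> a \<le> b \<longrightarrow> (\<forall>\<sigma>\<in>{a..b}. norm (x \<sigma>) \<le> R) \<longrightarrow> (\<forall>\<sigma>\<in>{a..b}. \<bar>p \<sigma> - q \<sigma>\<bar> \<le> d) \<longrightarrow> d \<ge> 0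
      \<longrightarrow> exp ((2*B+1)*(b-a)) * (norm (x a - y a)^2 + (B*d)^2) < 1 \<longrightarrow> \<tau> \<in> {a..b}
      \<longrightarrow> norm (x \<tau> - y \<tau>)^2 \<le> exp ((2*B+1)*(\<tau>-a)) * (norm (x a - y a)^2 + (B*d)^2)) \<and> (\<forall>x y p q a b d \<tau>. sol f x p \<longrightarrow> sol f y q \<longrightarrow> (\<forall>\<sigma>. p \<sigma> \<in> {lm..lp}) \<longrightarrow> (\<forall>\<sigma>. q \<sigma> \<in> {lm..lp})
      \<longrightarrow> b \<le> a \<longrightarrow> (\<forall>\<sigma>\<in>{b..a}. norm (x \<sigma>) \<le> R) \<longrightarrow> (\<forall>\<sigma>\<in>{b..a}. \<bar>p \<sigma> - q \<sigma>\<bar> \<le> d) \<longrightarrow> d \<ge> 0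
      \<longrightarrow> exp ((2*B+1)*(a-b)) * (norm (x a - y a)^2 + (B*d)^2) < 1 \<longrightarrow> \<tau> \<in> {b..a}
      \<longrightarrow> norm (x \<tau> - y \<tau>)^2 \<le> exp ((2*B+1)*(a-\<tau>)) * (norm (x a - y a)^2 + (B*d)^2))"

lemma cmp_pos: "cmp_ok f lm lp R B \<Longrightarrow> B > 0" unfolding cmp_ok_def by blast

lemma cmp_fwd: "cmp_ok f lm lp R B \<Longrightarrow> sol f x p \<Longrightarrow> sol f y q \<Longrightarrow> (\<forall>\<sigma>. p \<sigma> \<in> {lm..lp}) \<Longrightarrow> (\<forall>\<sigma>. q \<sigma> \<in> {lm..lp})
      \<Longrightarrow> a \<le> b \<Longrightarrow> (\<forall>\<sigma>\<in>{a..b}. norm (x \<sigma>) \<le> R) \<Longrightarrow> (\<forall>\<sigma>\<in>{a..b}. \<bar>p \<sigma> - q \<sigma>\<bar> \<le> d) \<Longrightarrow> d \<ge> 0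
      \<Longrightarrow> exp ((2*B+1)*(b-a)) * (norm (x a - y a)^2 + (B*d)^2) < 1 \<Longrightarrow> \<tau> \<in> {a..b}
      \<Longrightarrow> norm (x \<tau> - y \<tau>)^2 \<le> exp ((2*B+1)*(\<tau>-a)) * (norm (x a - y a)^2 + (B*d)^2)"
  unfolding cmp_ok_def by blast

lemma cmp_bwd: "cmp_ok f lm lp R B \<Longrightarrow> sol f x p \<Longrightarrow> sol f y q \<Longrightarrow> (\<forall>\<sigma>. p \<sigma> \<in> {lm..lp}) \<Longrightarrow> (\<forall>\<sigma>. q \<sigma> \<in> {lm..lp})
      \<Longrightarrow> b \<le> a \<Longrightarrow> (\<forall>\<sigma>\<in>{b..a}. norm (x \<sigma>) \<le> R) \<Longrightarrow> (\<forall>\<sigma>\<in>{b..a}. \<bar>p \<sigma> - q \<sigma>\<bar> \<le> d) \<Longrightarrow> d \<ge> 0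
      \<Longrightarrow> exp ((2*B+1)*(a-b)) * (norm (x a - y a)^2 + (B*d)^2) < 1 \<Longrightarrow> \<tau> \<in> {b..a}
      \<Longrightarrow> norm (x \<tau> - y \<tau>)^2 \<le> exp ((2*B+1)*(a-\<tau>)) * (norm (x a - y a)^2 + (B*d)^2)"
  unfolding cmp_ok_def by blast

lemma compare:
  fixes f :: "'a::euclidean_space \<Rightarrow> real \<Rightarrow> 'a"
  assumes "C1_fun2 f"
  shows "\<exists>B. cmp_ok f lm lp R B"
proof -
  obtain B where B: "B > 0" "\<And>z w l m. norm z \<le> R+1 \<Longrightarrow> norm w \<le> R+1 \<Longrightarrow> l \<in> {lm..lp} \<Longrightarrow> m \<in> {lm..lp}
      \<Longrightarrow> norm (f z l - f w m) \<le> B * (norm (z - w) + \<bar>l - m\<bar>)"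
    using C1_lip[OF assms, of "R+1" lm lp] by blast
  have key: "norm (f (x \<sigma>) (p \<sigma>) - f (y \<sigma>) (q \<sigma>)) \<le> B * norm (x \<sigma> - y \<sigma>) + B * d"
    if "norm (x \<sigma>) \<le> R" "norm (x \<sigma> - y \<sigma>) \<le> 1" "p \<sigma> \<in> {lm..lp}" "q \<sigma> \<in> {lm..lp}" "\<bar>p \<sigma> - q \<sigma>\<bar> \<le> d"
    for x y :: "real \<Rightarrow> 'a" and p q :: "real \<Rightarrow> real" and \<sigma> d
  proof -
    have "norm (y \<sigma>) \<le> R + 1" using that(1,2) norm_triangle_ineq2[of "y \<sigma>" "x \<sigma>"] norm_minus_commute[of "x \<sigma>" "y \<sigma>"] by linarith
    then have "norm (f (x \<sigma>) (p \<sigma>) - f (y \<sigma>) (q \<sigma>)) \<le> B * (norm (x \<sigma> - y \<sigma>) + \<bar>p \<sigma> - q \<sigma>\<bar>)"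
      using that by (intro B(2)) auto
    also have "\<dots> \<le> B * (norm (x \<sigma> - y \<sigma>) + d)" using that B(1) by (intro mult_left_mono) auto
    finally show ?thesis by (simp add: algebra_simps)
  qed
  have "(\<forall>x y p q a b d \<tau>. sol f x p \<longrightarrow> sol f y q \<longrightarrow> (\<forall>\<sigma>. p \<sigma> \<in> {lm..lp}) \<longrightarrow> (\<forall>\<sigma>. q \<sigma> \<in> {lm..lp})
      \<longrightarrow> a \<le> b \<longrightarrow> (\<forall>\<sigma>\<in>{a..b}. norm (x \<sigma>) \<le> R) \<longrightarrow> (\<forall>\<sigma>\<in>{a..b}. \<bar>p \<sigma> - q \<sigma>\<bar> \<le> d) \<longrightarrow> d \<ge> 0
      \<longrightarrow> exp ((2*B+1)*(b-a)) * (norm (x a - y a)^2 + (B*d)^2) < 1 \<longrightarrow> \<tau> \<in> {a..b}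
      \<longrightarrow> norm (x \<tau> - y \<tau>)^2 \<le> exp ((2*B+1)*(\<tau>-a)) * (norm (x a - y a)^2 + (B*d)^2)) \<and> (\<forall>x y p q a b d \<tau>. sol f x p \<longrightarrow> sol f y q \<longrightarrow> (\<forall>\<sigma>. p \<sigma> \<in> {lm..lp}) \<longrightarrow> (\<forall>\<sigma>. q \<sigma> \<in> {lm..lp})
      \<longrightarrow> b \<le> a \<longrightarrow> (\<forall>\<sigma>\<in>{b..a}. norm (x \<sigma>) \<le> R) \<longrightarrow> (\<forall>\<sigma>\<in>{b..a}. \<bar>p \<sigma> - q \<sigma>\<bar> \<le> d) \<longrightarrow> d \<ge> 0
      \<longrightarrow> exp ((2*B+1)*(a-b)) * (norm (x a - y a)^2 + (B*d)^2) < 1 \<longrightarrow> \<tau> \<in> {b..a}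
      \<longrightarrow> norm (x \<tau> - y \<tau>)^2 \<le> exp ((2*B+1)*(a-\<tau>)) * (norm (x a - y a)^2 + (B*d)^2))"
  proof (intro conjI allI impI)
    fix x y p q a b d \<tau>
    assume h: "sol f x p" "sol f y q" "\<forall>\<sigma>. p \<sigma> \<in> {lm..lp}" "\<forall>\<sigma>. q \<sigma> \<in> {lm..lp}" "a \<le> b"
      "\<forall>\<sigma>\<in>{a..b}. norm (x \<sigma>) \<le> R" "\<forall>\<sigma>\<in>{a..b}. \<bar>p \<sigma> - q \<sigma>\<bar> \<le> d" "d \<ge> 0"
      "exp ((2*B+1)*(b-a)) * (norm (x a - y a)^2 + (B*d)^2) < 1" "\<tau> \<in> {a..b}"
    show "norm (x \<tau> - y \<tau>)^2 \<le> exp ((2*B+1)*(\<tau>-a)) * (norm (x a - y a)^2 + (B*d)^2)"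
      by (rule master_fwd[where a=a and b=b and L=B and e="B*d" and x=x and y=y and X="\<lambda>\<sigma>. f (x \<sigma>) (p \<sigma>)" and Y="\<lambda>\<sigma>. f (y \<sigma>) (q \<sigma>)", OF h(5) _ _ _ _ _ h(9)])
        (use h B(1) key[of x _ y p q] in \<open>auto simp: sol_def\<close>)
  next
    fix x y p q a b d \<tau>
    assume h: "sol f x p" "sol f y q" "\<forall>\<sigma>. p \<sigma> \<in> {lm..lp}" "\<forall>\<sigma>. q \<sigma> \<in> {lm..lp}" "b \<le> a"
      "\<forall>\<sigma>\<in>{b..a}. norm (x \<sigma>) \<le> R" "\<forall>\<sigma>\<in>{b..a}. \<bar>p \<sigma> - q \<sigma>\<bar> \<le> d" "d \<ge> 0"
      "exp ((2*B+1)*(a-b)) * (norm (x a - y a)^2 + (B*d)^2) < 1" "\<tau> \<in> {b..a}"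
    show "norm (x \<tau> - y \<tau>)^2 \<le> exp ((2*B+1)*(a-\<tau>)) * (norm (x a - y a)^2 + (B*d)^2)"
      by (rule master_bwd[where a=a and b=b and L=B and e="B*d" and x=x and y=y and X="\<lambda>\<sigma>. f (x \<sigma>) (p \<sigma>)" and Y="\<lambda>\<sigma>. f (y \<sigma>) (q \<sigma>)", OF h(5) _ _ _ _ _ h(9)])
        (use h B(1) key[of x _ y p q] in \<open>auto simp: sol_def\<close>)
  qed
  then show ?thesis using B(1) unfolding cmp_ok_def by blast
qed

lemma sol_cont: "sol f x p \<Longrightarrow> continuous_on UNIV x"
  unfolding sol_def by (meson continuous_at_imp_continuous_on has_vector_derivative_continuous)

lemma bound_on:
  fixes x :: "real \<Rightarrow> 'a::real_normed_vector"
  assumes "continuous_on UNIV x"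
  obtains R where "\<And>\<sigma>. \<sigma> \<in> {a..b} \<Longrightarrow> norm (x \<sigma>) \<le> R"
proof -
  have "compact (x ` {a..b})" by (rule compact_continuous_image[OF continuous_on_subset[OF assms]]) auto
  then show ?thesis using that compact_imp_bounded bounded_iff by (metis image_eqI)
qed

lemma sol_unique:
  fixes f :: "'a::euclidean_space \<Rightarrow> real \<Rightarrow> 'a"
  assumes C1: "C1_fun2 f" and sx: "sol f x p" and sy: "sol f y p"
    and pr: "\<forall>\<sigma>. p \<sigma> \<in> {lm..lp}" and eq: "x a = y a"
  shows "x t = y t"
proof -
  obtain R where R: "\<And>\<sigma>. \<sigma> \<in> {min a t..max a t} \<Longrightarrow> norm (x \<sigma>) \<le> R"
    using bound_on[OF sol_cont[OF sx]] by blast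
  obtain B where cB: "cmp_ok f lm lp R B" using compare[OF C1] by blast
  have B1: "B > 0" by (rule cmp_pos[OF cB])
  have "norm (x t - y t)^2 \<le> 0"
  proof (cases "a \<le> t")
    case True
    have r: "\<forall>\<sigma>\<in>{a..t}. norm (x \<sigma>) \<le> R" using R True by auto
    have "norm (x t - y t)^2 \<le> exp ((2*B+1)*(t-a)) * (norm (x a - y a)^2 + (B*0)^2)"
      by (rule cmp_fwd[OF cB sx sy pr pr True r]) (use True eq in auto)
    then show ?thesis using eq by simp
  next
    case False
    have r: "\<forall>\<sigma>\<in>{t..a}. norm (x \<sigma>) \<le> R" using R False by auto
    have "norm (x t - y t)^2 \<le> exp ((2*B+1)*(a-t)) * (norm (x a - y a)^2 + (B*0)^2)"
      by (rule cmp_bwd[OF cB sx sy pr pr _ r]) (use False eq in auto)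
    then show ?thesis using eq by simp
  qed
  then show ?thesis by simp
qed

lemma dep_fwd:
  fixes f :: "'a::euclidean_space \<Rightarrow> real \<Rightarrow> 'a"
  assumes C1: "C1_fun2 f" and sG: "\<And>y. sol f (G y) p" and G0: "\<And>y. G y s = y"
    and pr: "\<forall>\<sigma>. p \<sigma> \<in> {lm..lp}" and sb: "s \<le> b" and e: "\<epsilon> > 0"
  shows "\<exists>\<delta>>0. \<forall>y. dist y y0 < \<delta> \<longrightarrow> (\<forall>\<tau>\<in>{s..b}. dist (G y \<tau>) (G y0 \<tau>) < \<epsilon>)"
proof -
  obtain R where R: "\<And>\<sigma>. \<sigma> \<in> {s..b} \<Longrightarrow> norm (G y0 \<sigma>) \<le> R"
    using bound_on[OF sol_cont[OF sG[of y0]]] by blast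
  obtain B where cB: "cmp_ok f lm lp R B" using compare[OF C1] by blast
  have B1: "B > 0" by (rule cmp_pos[OF cB])
  define c where "c = exp ((2*B+1)*(b-s))"
  have c0: "c > 0" unfolding c_def by simp
  define m where "m = min 1 \<epsilon>"
  have m0: "m > 0" "m \<le> 1" "m \<le> \<epsilon>" using e unfolding m_def by auto
  define \<delta> where "\<delta> = m / sqrt (2*c)"
  have d0: "\<delta> > 0" unfolding \<delta>_def using m0 c0 by simp
  have cd: "c * \<delta>^2 = m^2 / 2" unfolding \<delta>_def using c0 by (simp add: power_divide)
  have "\<forall>y. dist y y0 < \<delta> \<longrightarrow> (\<forall>\<tau>\<in>{s..b}. dist (G y \<tau>) (G y0 \<tau>) < \<epsilon>)"
  proof (intro allI impI ballI)
    fix y \<tau> assume y: "dist y y0 < \<delta>" and t: "\<tau> \<in> {s..b}"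
    have n0: "norm (G y0 s - G y s)^2 \<le> \<delta>^2"
      using y G0 by (simp add: dist_norm norm_minus_commute power_mono)
    have sm: "c * norm (G y0 s - G y s)^2 \<le> m^2/2"
      using mult_left_mono[OF n0, of c] c0 cd by simp
    have m2: "m^2 / 2 < m^2" "m^2 \<le> 1" "m^2 \<le> \<epsilon>^2" using m0 by (auto simp: power_le_one power_mono)
    have "norm (G y0 \<tau> - G y \<tau>)^2 \<le> exp ((2*B+1)*(\<tau>-s)) * (norm (G y0 s - G y s)^2 + (B*0)^2)"
    proof (rule cmp_fwd[OF cB sG sG pr pr sb])
      show "\<forall>\<sigma>\<in>{s..b}. norm (G y0 \<sigma>) \<le> R" using R by blast
      show "\<forall>\<sigma>\<in>{s..b}. \<bar>p \<sigma> - p \<sigma>\<bar> \<le> 0" by simp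
      show "exp ((2*B+1)*(b-s)) * (norm (G y0 s - G y s)^2 + (B*0)^2) < 1"
        using sm m2 unfolding c_def by simp
    qed (use t in auto)
    also have "\<dots> \<le> c * norm (G y0 s - G y s)^2"
      using t B1 unfolding c_def by (simp add: mult_right_mono)
    finally have "norm (G y0 \<tau> - G y \<tau>)^2 < \<epsilon>^2" using sm m2 by linarith
    then show "dist (G y \<tau>) (G y0 \<tau>) < \<epsilon>"
      using e by (simp add: dist_norm norm_minus_commute power_less_imp_less_base)
  qed
  then show ?thesis using d0 by blast
qed



lemma dep_bwd:
  fixes f :: "'a::euclidean_space \<Rightarrow> real \<Rightarrow> 'a"
  assumes C1: "C1_fun2 f" and sG: "\<And>y. sol f (G y) p" and G0: "\<And>y. G y s = y"
    and pr: "\<forall>\<sigma>. p \<sigma> \<in> {lm..lp}" and sb: "b \<le> s" and e: "\<epsilon> > 0"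
  shows "\<exists>\<delta>>0. \<forall>y. dist y y0 < \<delta> \<longrightarrow> (\<forall>\<tau>\<in>{b..s}. dist (G y \<tau>) (G y0 \<tau>) < \<epsilon>)"
proof -
  obtain R where R: "\<And>\<sigma>. \<sigma> \<in> {b..s} \<Longrightarrow> norm (G y0 \<sigma>) \<le> R"
    using bound_on[OF sol_cont[OF sG[of y0]]] by blast
  obtain B where cB: "cmp_ok f lm lp R B" using compare[OF C1] by blast
  have B1: "B > 0" by (rule cmp_pos[OF cB])
  define c where "c = exp ((2*B+1)*(s-b))"
  have c0: "c > 0" unfolding c_def by simp
  define m where "m = min 1 \<epsilon>"
  have m0: "m > 0" "m \<le> 1" "m \<le> \<epsilon>" using e unfolding m_def by auto
  define \<delta> where "\<delta> = m / sqrt (2*c)"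
  have d0: "\<delta> > 0" unfolding \<delta>_def using m0 c0 by simp
  have cd: "c * \<delta>^2 = m^2 / 2" unfolding \<delta>_def using c0 by (simp add: power_divide)
  have "\<forall>y. dist y y0 < \<delta> \<longrightarrow> (\<forall>\<tau>\<in>{b..s}. dist (G y \<tau>) (G y0 \<tau>) < \<epsilon>)"
  proof (intro allI impI ballI)
    fix y \<tau> assume y: "dist y y0 < \<delta>" and t: "\<tau> \<in> {b..s}"
    have n0: "norm (G y0 s - G y s)^2 \<le> \<delta>^2"
      using y G0 by (simp add: dist_norm norm_minus_commute power_mono)
    have sm: "c * norm (G y0 s - G y s)^2 \<le> m^2/2"
      using mult_left_mono[OF n0, of c] c0 cd by simp
    have m2: "m^2 / 2 < m^2" "m^2 \<le> 1" "m^2 \<le> \<epsilon>^2" using m0 by (auto simp: power_le_one power_mono)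
    have "norm (G y0 \<tau> - G y \<tau>)^2 \<le> exp ((2*B+1)*(s-\<tau>)) * (norm (G y0 s - G y s)^2 + (B*0)^2)"
    proof (rule cmp_bwd[OF cB sG sG pr pr sb])
      show "\<forall>\<sigma>\<in>{b..s}. norm (G y0 \<sigma>) \<le> R" using R by blast
      show "\<forall>\<sigma>\<in>{b..s}. \<bar>p \<sigma> - p \<sigma>\<bar> \<le> 0" by simp
      show "exp ((2*B+1)*(s-b)) * (norm (G y0 s - G y s)^2 + (B*0)^2) < 1"
        using sm m2 unfolding c_def by simp
    qed (use t in auto)
    also have "\<dots> \<le> c * norm (G y0 s - G y s)^2"
      using t B1 unfolding c_def by (simp add: mult_right_mono)
    finally have "norm (G y0 \<tau> - G y \<tau>)^2 < \<epsilon>^2" using sm m2 by linarith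
    then show "dist (G y \<tau>) (G y0 \<tau>) < \<epsilon>"
      using e by (simp add: dist_norm norm_minus_commute power_less_imp_less_base)
  qed
  then show ?thesis using d0 by blast
qed

lemma cont_sol:
  fixes f :: "'a::euclidean_space \<Rightarrow> real \<Rightarrow> 'a"
  assumes C1: "C1_fun2 f" and sG: "\<And>y. sol f (G y) p" and G0: "\<And>y. G y s = y"
    and pr: "\<forall>\<sigma>. p \<sigma> \<in> {lm..lp}"
  shows "continuous_on UNIV (\<lambda>y. G y t)"
  unfolding continuous_on_iff
proof (intro ballI allI impI)
  fix y0 :: 'a and \<epsilon> :: real assume e: "\<epsilon> > 0"
  show "\<exists>\<delta>>0. \<forall>y\<in>UNIV. dist y y0 < \<delta> \<longrightarrow> dist (G y t) (G y0 t) < \<epsilon>"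
  proof (cases "s \<le> t")
    case True
    from dep_fwd[OF C1 sG G0 pr True e, of y0] obtain \<delta> where
      d: "\<delta> > 0" "\<forall>y. dist y y0 < \<delta> \<longrightarrow> (\<forall>\<tau>\<in>{s..t}. dist (G y \<tau>) (G y0 \<tau>) < \<epsilon>)" by blast
    show ?thesis using True d by (intro exI[of _ \<delta>]) auto
  next
    case False
    then have "t \<le> s" by simp
    from dep_bwd[OF C1 sG G0 pr this e, of y0] obtain \<delta> where
      d: "\<delta> > 0" "\<forall>y. dist y y0 < \<delta> \<longrightarrow> (\<forall>\<tau>\<in>{t..s}. dist (G y \<tau>) (G y0 \<tau>) < \<epsilon>)" by blast
    show ?thesis using \<open>t \<le> s\<close> d by (intro exI[of _ \<delta>]) auto
  qed
qed



lemma compact_unif: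
  fixes K :: "'a::metric_space set"
  assumes K: "compact K"
    and loc: "\<And>y0. y0 \<in> K \<Longrightarrow> \<exists>\<delta>>0. \<exists>R::real. \<forall>y. dist y y0 < \<delta> \<longrightarrow> P R y"
    and mono: "\<And>R R' y. P R y \<Longrightarrow> R \<le> R' \<Longrightarrow> P R' y"
  shows "\<exists>R. \<forall>y\<in>K. P R y"
proof -
  obtain \<delta> R where dR: "\<And>y0. y0 \<in> K \<Longrightarrow> \<delta> y0 > 0 \<and> (\<forall>y. dist y y0 < \<delta> y0 \<longrightarrow> P (R y0) y)"
    using loc by metis
  obtain C where C: "C \<subseteq> K" "finite C" "K \<subseteq> (\<Union>c\<in>C. ball c (\<delta> c))"
    by (rule compactE_image[OF K, of K "\<lambda>c. ball c (\<delta> c)"]) (use dR in auto)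
  define M where "M = Max (insert 0 (R ` C))"
  have "\<forall>y\<in>K. P M y"
  proof
    fix y assume "y \<in> K"
    then obtain c where c: "c \<in> C" "y \<in> ball c (\<delta> c)" using C by auto
    then have "P (R c) y" using dR[of c] C(1) by (auto simp: dist_commute)
    moreover have "R c \<le> M" unfolding M_def using C(2) c(1) by (intro Max_ge) auto
    ultimately show "P M y" by (rule mono)
  qed
  then show ?thesis by blast
qed

lemma sol_shift:
  assumes "sol f x p" shows "sol f (\<lambda>\<sigma>. x (\<sigma> + h)) (\<lambda>\<sigma>. p (\<sigma> + h))"
  unfolding sol_def
proof
  fix \<sigma>
  have d1: "((\<lambda>\<sigma>. \<sigma> + h) has_vector_derivative 1) (at \<sigma>)"
    by (auto intro!: derivative_eq_intros)
  have "(x has_vector_derivative f (x (\<sigma> + h)) (p (\<sigma> + h))) (at (\<sigma> + h))"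
    using assms unfolding sol_def by blast
  from vector_diff_chain_at[OF d1 this]
  show "((\<lambda>\<sigma>. x (\<sigma> + h)) has_vector_derivative f (x (\<sigma> + h)) (p (\<sigma> + h))) (at \<sigma>)"
    by (simp add: o_def)
qed

locale setting =
  fixes f :: "'a::euclidean_space \<Rightarrow> real \<Rightarrow> 'a"
    and \<Lambda> :: "real \<Rightarrow> real"
    and lm lp r :: real
    and \<Phi> :: "real \<Rightarrow> real \<Rightarrow> 'a \<Rightarrow> 'a"
    and \<phi>m :: "real \<Rightarrow> 'a \<Rightarrow> 'a"
    and Am :: "'a set"
  assumes C1: "C1_fun2 f"
    and lmlp: "lm < lp"
    and ps: "parameter_shift \<Lambda> lm lp"
    and rpos: "r > 0"
    and coc: "is_solution_cocycle f \<Lambda> r \<Phi>"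
    and flow: "is_autonomous_flow f lm \<phi>m"
    and ast: "asymptotically_stable \<phi>m Am"
begin

definition P :: "real \<Rightarrow> real" where "P \<sigma> = \<Lambda> (r * \<sigma>)"

lemma prange: "\<forall>\<sigma>. P \<sigma> \<in> {lm..lp}"
  using ps unfolding parameter_shift_def P_def by (auto simp: less_imp_le)

lemma crange: "\<forall>\<sigma>. (\<lambda>_. lm) \<sigma> \<in> {lm..lp}"
  using lmlp by auto

lemma Phi_same[simp]: "\<Phi> s s x = x"
  using coc unfolding is_solution_cocycle_def by blast

lemma phi_zero[simp]: "\<phi>m 0 x = x"
  using flow unfolding is_autonomous_flow_def by blast

lemma solPhi: "sol f (\<lambda>\<tau>. \<Phi> \<tau> s x) P"
  using coc unfolding is_solution_cocycle_def sol_def P_def by blast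

lemma solphi: "sol f (\<lambda>\<tau>. \<phi>m \<tau> y) (\<lambda>_. lm)"
  using flow unfolding is_autonomous_flow_def sol_def by blast

lemma cocycle_aux: "\<Phi> u u (\<Phi> u s x) = \<Phi> u s x" by simp

lemma cocycle: "\<Phi> t u (\<Phi> u s x) = \<Phi> t s x"
  using sol_unique[OF C1 solPhi[of u "\<Phi> u s x"] solPhi[of s x] prange, where a=u and t=t] cocycle_aux by simp

lemma semigroup: "\<phi>m (t + s) y = \<phi>m t (\<phi>m s y)"
proof -
  have "(\<lambda>\<tau>. \<phi>m (\<tau> + s) y) t = (\<lambda>\<tau>. \<phi>m \<tau> (\<phi>m s y)) t"
    by (rule sol_unique[OF C1 sol_shift[OF solphi] solphi, of lm lp 0]) (use lmlp in auto)
  then show ?thesis by simp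
qed

lemma contPhi: "continuous_on UNIV (\<Phi> t s)"
  using cont_sol[OF C1 solPhi[of s] Phi_same prange, where t=t] by simp

lemma contphi: "continuous_on UNIV (\<phi>m t)"
  using cont_sol[OF C1 solphi phi_zero crange, where t=t] by simp

lemma Am: "Am \<noteq> {}" "compact Am"
  using ast unfolding asymptotically_stable_def by auto

lemma sd_single[simp]: "setdist_d {z} M = infdist z M"
  unfolding setdist_d_def by simp

lemma stab: "\<epsilon> > 0 \<Longrightarrow> \<exists>\<delta>>0. \<forall>t>0. \<forall>y. infdist y Am < \<delta> \<longrightarrow> infdist (\<phi>m t y) Am < \<epsilon>"
  using ast unfolding asymptotically_stable_def nbhd_def by auto

lemma attr: "\<exists>\<eta>>0. \<forall>y. infdist y Am < \<eta> \<longrightarrow> ((\<lambda>t. infdist (\<phi>m t y) Am) \<longlongrightarrow> 0) at_top"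
  using ast unfolding asymptotically_stable_def nbhd_def by auto

end



context setting begin

lemma unif_attr:
  assumes rho: "\<rho> > 0" and att: "\<And>y. infdist y Am \<le> \<rho> \<Longrightarrow> ((\<lambda>t. infdist (\<phi>m t y) Am) \<longlongrightarrow> 0) at_top"
    and e: "\<epsilon> > 0"
  shows "\<exists>L. \<forall>y. infdist y Am \<le> \<rho> \<longrightarrow> (\<forall>\<tau>\<ge>L. infdist (\<phi>m \<tau> y) Am < \<epsilon>)"
proof -
  obtain \<delta> where d: "\<delta> > 0" "\<forall>t>0. \<forall>y. infdist y Am < \<delta> \<longrightarrow> infdist (\<phi>m t y) Am < \<epsilon>"
    using stab[OF e] by blast
  define \<delta>' where "\<delta>' = min \<delta> \<epsilon>"
  have d': "\<delta>' > 0" "\<delta>' \<le> \<delta>" "\<delta>' \<le> \<epsilon>" unfolding \<delta>'_def using d e by auto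
  have K: "compact {y. infdist y Am \<le> \<rho>}" by (rule compact_infdist_le[OF Am rho])
  have "\<exists>L. \<forall>y\<in>{y. infdist y Am \<le> \<rho>}. (\<lambda>L y. \<forall>\<tau>\<ge>L. infdist (\<phi>m \<tau> y) Am < \<epsilon>) L y"
  proof (rule compact_unif[OF K])
    fix y0 :: 'a assume "y0 \<in> {y. infdist y Am \<le> \<rho>}"
    then have "((\<lambda>t. infdist (\<phi>m t y0) Am) \<longlongrightarrow> 0) at_top" using att by simp
    then have "eventually (\<lambda>t. infdist (\<phi>m t y0) Am < \<delta>'/2) at_top"
      by (rule order_tendstoD(2)) (use d' in simp)
    then obtain t0 where t0: "\<And>t. t \<ge> t0 \<Longrightarrow> infdist (\<phi>m t y0) Am < \<delta>'/2"
      unfolding eventually_at_top_linorder by blast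
    obtain \<delta>2 where d2: "\<delta>2 > 0" "\<forall>y\<in>UNIV. dist y y0 < \<delta>2 \<longrightarrow> dist (\<phi>m t0 y) (\<phi>m t0 y0) < \<delta>'/2"
      using contphi[of t0] d'(1) unfolding continuous_on_iff by (metis UNIV_I half_gt_zero)
    have "\<forall>y. dist y y0 < \<delta>2 \<longrightarrow> (\<forall>\<tau>\<ge>t0. infdist (\<phi>m \<tau> y) Am < \<epsilon>)"
    proof (intro allI impI)
      fix y \<tau> assume y: "dist y y0 < \<delta>2" and tau: "\<tau> \<ge> t0"
      have "infdist (\<phi>m t0 y) Am \<le> infdist (\<phi>m t0 y0) Am + dist (\<phi>m t0 y) (\<phi>m t0 y0)"
        by (rule infdist_triangle)
      also have "\<dots> < \<delta>'" using t0[of t0] d2 y by auto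
      finally have i0: "infdist (\<phi>m t0 y) Am < \<delta>'" .
      show "infdist (\<phi>m \<tau> y) Am < \<epsilon>"
      proof (cases "\<tau> = t0")
        case True then show ?thesis using i0 d' by simp
      next
        case False
        then have "\<tau> - t0 > 0" using tau by simp
        moreover have "\<phi>m \<tau> y = \<phi>m (\<tau> - t0) (\<phi>m t0 y)" using semigroup[of "\<tau> - t0" t0 y] by simp
        ultimately show ?thesis using d(2) i0 d' by auto
      qed
    qed
    then show "\<exists>\<delta>>0. \<exists>R. \<forall>y. dist y y0 < \<delta> \<longrightarrow> (\<lambda>L y. \<forall>\<tau>\<ge>L. infdist (\<phi>m \<tau> y) Am < \<epsilon>) R y"
      using d2(1) by blast
  qed auto
  then show ?thesis by auto
qed

lemma phi_bound:
  assumes K: "compact K" and W: "W \<ge> 0"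
  shows "\<exists>R. \<forall>y\<in>K. \<forall>\<tau>\<in>{0..W}. norm (\<phi>m \<tau> y) \<le> R"
proof -
  have "\<exists>R. \<forall>y\<in>K. (\<lambda>R y. \<forall>\<tau>\<in>{0..W}. norm (\<phi>m \<tau> y) \<le> R) R y"
  proof (rule compact_unif[OF K])
    fix y0 assume "y0 \<in> K"
    obtain R0 where R0: "\<And>\<sigma>. \<sigma> \<in> {0..W} \<Longrightarrow> norm (\<phi>m \<sigma> y0) \<le> R0"
      using bound_on[OF sol_cont[OF solphi[of y0]]] by blast
    obtain \<delta> where d: "\<delta> > 0" "\<forall>y. dist y y0 < \<delta> \<longrightarrow> (\<forall>\<tau>\<in>{0..W}. dist (\<phi>m \<tau> y) (\<phi>m \<tau> y0) < 1)"
    proof -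
      have "\<exists>\<delta>>0. \<forall>y. dist y y0 < \<delta> \<longrightarrow> (\<forall>\<tau>\<in>{0..W}. dist (\<phi>m \<tau> y) (\<phi>m \<tau> y0) < 1)"
        by (rule dep_fwd[OF C1 solphi phi_zero crange W]) simp
      then show ?thesis using that by blast
    qed
    have "\<forall>y. dist y y0 < \<delta> \<longrightarrow> (\<forall>\<tau>\<in>{0..W}. norm (\<phi>m \<tau> y) \<le> R0 + 1)"
    proof (intro allI impI ballI)
      fix y \<tau> assume "dist y y0 < \<delta>" "\<tau> \<in> {0..W}"
      then have "dist (\<phi>m \<tau> y) (\<phi>m \<tau> y0) < 1" "norm (\<phi>m \<tau> y0) \<le> R0" using d R0 by auto
      then show "norm (\<phi>m \<tau> y) \<le> R0 + 1"
        using norm_triangle_ineq2[of "\<phi>m \<tau> y" "\<phi>m \<tau> y0"] by (simp add: dist_norm)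
    qed
    then show "\<exists>\<delta>>0. \<exists>R. \<forall>y. dist y y0 < \<delta> \<longrightarrow> (\<lambda>R y. \<forall>\<tau>\<in>{0..W}. norm (\<phi>m \<tau> y) \<le> R) R y"
      using d(1) by blast
  qed auto
  then show ?thesis by auto
qed

lemma window:
  assumes K: "compact K" and W: "W \<ge> 0" and e: "\<epsilon> > 0"
  shows "\<exists>T1. \<forall>s\<le>T1. \<forall>y\<in>K. \<forall>\<tau>\<in>{0..W}. dist (\<Phi> (s+\<tau>) s y) (\<phi>m \<tau> y) < \<epsilon>"
proof -
  obtain R where R: "\<forall>y\<in>K. \<forall>\<tau>\<in>{0..W}. norm (\<phi>m \<tau> y) \<le> R" using phi_bound[OF K W] by blast
  obtain B where cB: "cmp_ok f lm lp R B" using compare[OF C1] by blast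
  have B1: "B > 0" by (rule cmp_pos[OF cB])
  define c where "c = exp ((2*B+1)*W)"
  have c0: "c > 0" unfolding c_def by simp
  define m where "m = min 1 \<epsilon>"
  have m0: "m > 0" "m \<le> 1" "m \<le> \<epsilon>" using e unfolding m_def by auto
  define d where "d = m / (B * sqrt (2*c))"
  have d0: "d > 0" unfolding d_def using m0 c0 B1 by simp
  have cd: "c * (B*d)^2 = m^2 / 2" unfolding d_def using c0 B1 by (simp add: power_divide power_mult_distrib)
  have m2: "m^2 / 2 < m^2" "m^2 \<le> 1" "m^2 \<le> \<epsilon>^2" using m0 by (auto simp: power_le_one power_mono)
  have "(\<Lambda> \<longlongrightarrow> lm) at_bot" using ps unfolding parameter_shift_def by blast
  then have "eventually (\<lambda>x. dist (\<Lambda> x) lm < d) at_bot" using d0 by (simp add: tendsto_iff)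
  then obtain N where N: "\<And>x. x \<le> N \<Longrightarrow> dist (\<Lambda> x) lm < d" unfolding eventually_at_bot_linorder by blast
  define T1 where "T1 = N / r - W"
  have "\<forall>s\<le>T1. \<forall>y\<in>K. \<forall>\<tau>\<in>{0..W}. dist (\<Phi> (s+\<tau>) s y) (\<phi>m \<tau> y) < \<epsilon>"
  proof (intro allI impI ballI)
    fix s y \<tau> assume s: "s \<le> T1" and y: "y \<in> K" and tau: "\<tau> \<in> {0..W}"
    have sx: "sol f (\<lambda>\<sigma>. \<phi>m (\<sigma> + - s) y) (\<lambda>\<sigma>. lm)" using sol_shift[OF solphi[of y], of "-s"] by simp
    have pq: "\<forall>\<sigma>\<in>{s..s+W}. \<bar>lm - P \<sigma>\<bar> \<le> d"
    proof
      fix \<sigma> assume "\<sigma> \<in> {s..s+W}"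
      then have "\<sigma> \<le> N / r" using s unfolding T1_def by auto
      then have "r * \<sigma> \<le> N" using rpos by (simp add: field_simps)
      then show "\<bar>lm - P \<sigma>\<bar> \<le> d" using N[of "r*\<sigma>"] unfolding P_def by (simp add: dist_real_def abs_minus_commute)
    qed
    have bx: "\<forall>\<sigma>\<in>{s..s+W}. norm (\<phi>m (\<sigma> + - s) y) \<le> R" using R y by auto
    have "norm (\<phi>m (s + \<tau> + - s) y - \<Phi> (s+\<tau>) s y)^2 \<le> exp ((2*B+1)*(s+\<tau>-s)) * (norm (\<phi>m (s + - s) y - \<Phi> s s y)^2 + (B*d)^2)"
    proof (rule cmp_fwd[OF cB sx solPhi crange prange _ bx pq])
      show "exp ((2*B+1)*(s+W-s)) * (norm (\<phi>m (s + - s) y - \<Phi> s s y)^2 + (B*d)^2) < 1"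
        using cd m2 unfolding c_def by simp
    qed (use tau d0 W in auto)
    also have "\<dots> \<le> c * (B*d)^2" unfolding c_def using tau B1 by (simp add: mult_right_mono)
    finally have h: "norm (\<phi>m \<tau> y - \<Phi> (s+\<tau>) s y)^2 \<le> c * (B*d)^2" by simp
    have "norm (\<phi>m \<tau> y - \<Phi> (s+\<tau>) s y)^2 < \<epsilon>^2" using h cd m2 by linarith
    then show "dist (\<Phi> (s+\<tau>) s y) (\<phi>m \<tau> y) < \<epsilon>"
      using e by (simp add: dist_norm norm_minus_commute power_less_imp_less_base)
  qed
  then show ?thesis by blast
qed

end



lemma nested_gen:
  fixes F :: "real \<Rightarrow> 'a::euclidean_space set"
  assumes Fc: "\<And>\<sigma>. compact (F \<sigma>)" and Fne: "\<And>\<sigma>. F \<sigma> \<noteq> {}"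
    and Fm: "\<And>m n. m \<le> n \<Longrightarrow> F n \<subseteq> F m" and e: "\<epsilon> > 0"
  shows "\<exists>\<sigma>. \<forall>x\<in>F \<sigma>. infdist x (\<Inter>(range F)) < \<epsilon>"
proof -
  define Ast where "Ast = \<Inter>(range F)"
  define E where "E \<sigma> = F \<sigma> \<inter> {x. \<epsilon> \<le> infdist x Ast}" for \<sigma>
  have "\<exists>\<sigma>. E \<sigma> = {}"
  proof (rule ccontr)
    assume "\<not> (\<exists>\<sigma>. E \<sigma> = {})"
    then have ne: "E \<sigma> \<noteq> {}" for \<sigma> by auto
    have cl: "closed {x. \<epsilon> \<le> infdist x Ast}"
      by (rule closed_Collect_le[OF continuous_on_const continuous_on_infdist[OF continuous_on_id]])
    have Ec: "compact (E \<sigma>)" for \<sigma>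
      unfolding E_def by (rule compact_Int_closed[OF Fc cl])
    have Em: "E n \<subseteq> E m" if "m \<le> n" for m n unfolding E_def using Fm[OF that] by auto
    have "\<Inter>(range E) \<noteq> {}" by (rule compact_nest[OF Ec ne Em])
    then obtain x where "x \<in> \<Inter>(range E)" unfolding ex_in_conv[symmetric] by blast
    then have "x \<in> Ast" "\<epsilon> \<le> infdist x Ast" unfolding E_def Ast_def by auto
    then show False using e by simp
  qed
  then obtain \<sigma> where s0: "E \<sigma> = {}" by blast
  have "\<forall>x\<in>F \<sigma>. infdist x Ast < \<epsilon>"
    using s0 unfolding E_def by auto
  then show ?thesis unfolding Ast_def by blast
qed

context setting begin

lemma cont_infdist_UNIV: "continuous_on UNIV (\<lambda>x. infdist x S)"
  by (intro continuous_intros)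

lemma main: "\<exists>A. local_pullback_attractor \<Phi> A \<and> upper_backward_limit A \<subseteq> Am"
proof -
  obtain \<eta> where eta: "\<eta> > 0" "\<forall>y. infdist y Am < \<eta> \<longrightarrow> ((\<lambda>t. infdist (\<phi>m t y) Am) \<longlongrightarrow> 0) at_top"
    using attr by blast
  define \<rho> where "\<rho> = \<eta> / 2"
  have rho: "\<rho> > 0" "\<rho> < \<eta>" using eta unfolding \<rho>_def by auto
  define K where "K = {y. infdist y Am \<le> \<rho>}"
  have Kc: "compact K" unfolding K_def by (rule compact_infdist_le[OF Am rho(1)])
  have att: "\<And>y. infdist y Am \<le> \<rho> \<Longrightarrow> ((\<lambda>t. infdist (\<phi>m t y) Am) \<longlongrightarrow> 0) at_top"
    using eta rho by auto
  have AmK: "Am \<subseteq> K" unfolding K_def using rho by auto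
  have Kne: "K \<noteq> {}" using AmK Am by auto
  have UA: "\<exists>L. \<forall>y\<in>K. \<forall>\<tau>\<ge>L. infdist (\<phi>m \<tau> y) Am < \<epsilon>" if "\<epsilon> > 0" for \<epsilon>
    using unif_attr[OF rho(1) att that] unfolding K_def by auto
  obtain L1 where L1: "\<forall>y\<in>K. \<forall>\<tau>\<ge>L1. infdist (\<phi>m \<tau> y) Am < \<rho>/2"
    using UA[of "\<rho>/2"] rho by auto
  define T where "T = max L1 1"
  have T: "T > 0" "T \<ge> L1" unfolding T_def by auto
  obtain T0 where T0: "\<forall>s\<le>T0. \<forall>y\<in>K. \<forall>\<tau>\<in>{0..T}. dist (\<Phi> (s+\<tau>) s y) (\<phi>m \<tau> y) < \<rho>/2"
    using window[OF Kc _ , of T "\<rho>/2"] T rho by auto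
  obtain R where R: "\<forall>y\<in>K. \<forall>\<tau>\<in>{0..T}. norm (\<phi>m \<tau> y) \<le> R"
    using phi_bound[OF Kc, of T] T by auto
  have step: "\<Phi> (s+T) s y \<in> K" if "s \<le> T0" "y \<in> K" for s y
  proof -
    have "infdist (\<Phi> (s+T) s y) Am \<le> infdist (\<phi>m T y) Am + dist (\<Phi> (s+T) s y) (\<phi>m T y)"
      by (rule infdist_triangle)
    also have "\<dots> < \<rho>/2 + \<rho>/2" using L1 T0 that T by (intro add_strict_mono) auto
    finally show ?thesis unfolding K_def by simp
  qed
  have iter: "\<Phi> (s + real n * T) s y \<in> K" if "y \<in> K" "s + real n * T \<le> T0 + T" for n s y
    using that
  proof (induction n)
    case 0 then show ?case by simp
  next
    case (Suc n)
    have h: "s + real n * T \<le> T0" using Suc.prems(2) by (simp add: algebra_simps)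
    have z: "\<Phi> (s + real n * T) s y \<in> K" using Suc.IH[OF Suc.prems(1)] h T by simp
    have "\<Phi> (s + real n * T + T) (s + real n * T) (\<Phi> (s + real n * T) s y) \<in> K"
      by (rule step[OF h z])
    then show ?case by (simp add: cocycle algebra_simps)
  qed
  have reduce: "\<exists>z\<in>K. \<exists>\<tau>. c \<le> \<tau> \<and> \<tau> \<le> c + T \<and> \<Phi> u s' y = \<Phi> u (u - \<tau>) z"
    if c: "0 \<le> c" and s': "s' \<le> u - c" and u: "u - c \<le> T0" and y: "y \<in> K" for c u s' y
  proof -
    define q where "q = (u - c - s') / T"
    have q0: "q \<ge> 0" unfolding q_def using s' T by simp
    define n where "n = nat \<lfloor>q\<rfloor>"
    have rn: "real n = real_of_int \<lfloor>q\<rfloor>" unfolding n_def using q0 by simp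
    have n1: "real n \<le> q" "q < real n + 1" using rn by auto
    have qT: "q * T = u - c - s'" unfolding q_def using T by simp
    have a1: "real n * T \<le> u - c - s'" using mult_right_mono[OF n1(1), of T] T qT by simp
    have a2: "u - c - s' < (real n + 1) * T" using mult_strict_right_mono[OF n1(2) T(1)] qT by simp
    define s'' where "s'' = s' + real n * T"
    have z: "\<Phi> s'' s' y \<in> K" unfolding s''_def by (rule iter[OF y]) (use a1 u T in simp)
    have "c \<le> u - s''" "u - s'' \<le> c + T" using a1 a2 unfolding s''_def by (auto simp: algebra_simps)
    moreover have "\<Phi> u s' y = \<Phi> u (u - (u - s'')) (\<Phi> s'' s' y)" by (simp add: cocycle)
    ultimately show ?thesis using z by blast
  qed
  have bnd: "norm (\<Phi> T0 s' y) \<le> R + \<rho>/2" if sT: "s' \<le> T0" and yK: "y \<in> K" for s' y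
  proof -
    obtain z \<tau> where z: "z \<in> K" "0 \<le> \<tau>" "\<tau> \<le> T" "\<Phi> T0 s' y = \<Phi> T0 (T0 - \<tau>) z"
    proof -
      have "\<exists>z\<in>K. \<exists>\<tau>. 0 \<le> \<tau> \<and> \<tau> \<le> 0 + T \<and> \<Phi> T0 s' y = \<Phi> T0 (T0 - \<tau>) z"
        by (rule reduce) (use sT yK in auto)
      then show ?thesis using that by auto
    qed
    have "dist (\<Phi> (T0 - \<tau> + \<tau>) (T0 - \<tau>) z) (\<phi>m \<tau> z) < \<rho>/2" using T0[rule_format, of "T0 - \<tau>" z \<tau>] z by auto
    then have "dist (\<Phi> T0 s' y) (\<phi>m \<tau> z) < \<rho>/2" using z by simp
    moreover have "norm (\<phi>m \<tau> z) \<le> R" using R z by auto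
    ultimately show ?thesis using norm_triangle_ineq2[of "\<Phi> T0 s' y" "\<phi>m \<tau> z"] by (simp add: dist_norm)
  qed
  define D where "D s = closure (\<Union>s'\<in>{..s}. \<Phi> T0 s' ` K)" for s
  have Dcomp: "compact (D s)" if "s \<le> T0" for s
  proof -
    have "(\<Union>s'\<in>{..s}. \<Phi> T0 s' ` K) \<subseteq> cball 0 (R + \<rho>/2)" using bnd that by auto
    then have "bounded (\<Union>s'\<in>{..s}. \<Phi> T0 s' ` K)" using bounded_cball bounded_subset by blast
    then show ?thesis unfolding D_def using compact_closure by blast
  qed
  have Dne: "D s \<noteq> {}" for s unfolding D_def using Kne by auto
  have Dmono: "D s1 \<subseteq> D s2" if "s1 \<le> s2" for s1 s2
    unfolding D_def using that by (intro closure_mono) (auto intro: order_trans)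
  have Din: "\<Phi> T0 s x \<in> D s" if "x \<in> K" for s x
    unfolding D_def using that closure_subset by fastforce
  define F where "F \<sigma> = D (min T0 (- \<sigma>))" for \<sigma> :: real
  define Ast where "Ast = \<Inter>(range F)"
  have Fc: "compact (F \<sigma>)" "F \<sigma> \<noteq> {}" for \<sigma> unfolding F_def using Dcomp Dne by auto
  have Fm: "F n \<subseteq> F m" if "m \<le> n" for m n unfolding F_def using that by (intro Dmono) auto
  have Astne: "Ast \<noteq> {}" unfolding Ast_def by (rule compact_nest[OF Fc Fm])
  have AstD: "Ast \<subseteq> D s" if "s \<le> T0" for s
  proof
    fix x assume "x \<in> Ast"
    then have "x \<in> F (-s)" unfolding Ast_def by blast
    then show "x \<in> D s" unfolding F_def using that by (cases "T0 = s") (auto simp: min_def)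
  qed
  have Astc: "compact Ast"
  proof -
    have "closed Ast" unfolding Ast_def using Fc compact_imp_closed by blast
    then have "compact (D T0 \<inter> Ast)" using Dcomp by blast
    moreover have "D T0 \<inter> Ast = Ast" using AstD by auto
    ultimately show ?thesis by simp
  qed
  define A where "A t = \<Phi> t T0 ` Ast" for t
  have A1: "A t \<noteq> {} \<and> compact (A t)" for t
    unfolding A_def using Astne Astc
    by (auto intro!: compact_continuous_image continuous_on_subset[OF contPhi])
  have A2: "\<Phi> t s ` A s = A t" for t s
    unfolding A_def by (simp add: image_image cocycle)

  define U where "U = {y. infdist y Am < \<rho>}"
  have Uo: "open U" unfolding U_def by (rule open_Collect_less[OF cont_infdist_UNIV continuous_on_const])
  have UK: "U \<subseteq> K" unfolding U_def K_def by auto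
  have Ub: "bounded U" using compact_imp_bounded[OF Kc] bounded_subset UK by blast
  have AmU: "Am \<subseteq> U" unfolding U_def using rho by auto
  have Une: "U \<noteq> {}" using AmU Am by auto
  have clK: "closed {x. infdist x Am \<le> e}" for e
    by (rule closed_Collect_le[OF cont_infdist_UNIV continuous_on_const])
  have nested: "\<exists>S1\<le>T0. \<forall>s\<le>S1. \<forall>x\<in>D s. infdist x Ast < \<epsilon>" if e: "\<epsilon> > 0" for \<epsilon>
  proof -
    obtain \<sigma> where s0: "\<forall>x\<in>F \<sigma>. infdist x Ast < \<epsilon>"
      using nested_gen[of F, OF Fc(1) Fc(2) Fm e] unfolding Ast_def by blast
    have "\<forall>s\<le>min T0 (-\<sigma>). \<forall>x\<in>D s. infdist x Ast < \<epsilon>"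
    proof (intro allI impI ballI)
      fix s x assume s: "s \<le> min T0 (-\<sigma>)" and x: "x \<in> D s"
      have "D s \<subseteq> F \<sigma>" unfolding F_def by (rule Dmono[OF s])
      then show "infdist x Ast < \<epsilon>" using s0 x by blast
    qed
    then show ?thesis by (intro exI[of _ "min T0 (-\<sigma>)"]) auto
  qed
  have attract: "((\<lambda>s. setdist_d (\<Phi> t s ` U) (A t)) \<longlongrightarrow> 0) at_bot" for t
  proof -
    have uc: "uniformly_continuous_on (D T0) (\<Phi> t T0)"
      by (rule compact_uniformly_continuous[OF continuous_on_subset[OF contPhi] Dcomp]) auto
    show ?thesis unfolding tendsto_iff
    proof (intro allI impI)
      fix \<epsilon> :: real assume e: "\<epsilon> > 0"
      obtain \<delta> where d: "\<delta> > 0" "\<forall>x\<in>D T0. \<forall>x'\<in>D T0. dist x' x < \<delta> \<longrightarrow> dist (\<Phi> t T0 x') (\<Phi> t T0 x) < \<epsilon>/2"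
      proof -
        have "\<epsilon>/2 > 0" using e by simp
        from uc[unfolded uniformly_continuous_on_def, rule_format, OF this] show ?thesis using that by blast
      qed
      obtain S1 where S1: "S1 \<le> T0" "\<forall>s\<le>S1. \<forall>x\<in>D s. infdist x Ast < \<delta>" using nested[OF d(1)] by blast
      have "\<forall>s\<le>S1. dist (setdist_d (\<Phi> t s ` U) (A t)) 0 < \<epsilon>"
      proof (intro allI impI)
        fix s assume s: "s \<le> S1"
        have pt: "infdist y (A t) \<le> \<epsilon>/2" if yin: "y \<in> \<Phi> t s ` U" for y
        proof -
          obtain x where x: "x \<in> U" "y = \<Phi> t s x" using yin by blast
          have xD: "\<Phi> T0 s x \<in> D s" using Din UK x by auto
          have lt: "infdist (\<Phi> T0 s x) Ast < \<delta>" using S1 s xD by auto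
          obtain a where a: "a \<in> Ast" "infdist (\<Phi> T0 s x) Ast = dist (\<Phi> T0 s x) a"
            using infdist_attains_inf[OF compact_imp_closed[OF Astc] Astne] by blast
          have "D s \<subseteq> D T0" using Dmono s S1 by auto
          then have "\<Phi> T0 s x \<in> D T0" "a \<in> D T0" using xD a(1) AstD[of T0] by auto
          then have "dist (\<Phi> t T0 (\<Phi> T0 s x)) (\<Phi> t T0 a) < \<epsilon>/2" using d(2) lt a(2) by auto
          then have "dist y (\<Phi> t T0 a) < \<epsilon>/2" using x by (simp add: cocycle)
          moreover have "\<Phi> t T0 a \<in> A t" unfolding A_def using a by blast
          ultimately show ?thesis using infdist_le[of "\<Phi> t T0 a" "A t" y] by linarith
        qed
        have sup: "setdist_d (\<Phi> t s ` U) (A t) \<le> \<epsilon>/2"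
          unfolding setdist_d_def by (rule cSUP_least) (use Une pt in auto)
        have "0 \<le> setdist_d (\<Phi> t s ` U) (A t)"
        proof -
          obtain x where x: "x \<in> U" using Une by blast
          have "infdist (\<Phi> t s x) (A t) \<le> setdist_d (\<Phi> t s ` U) (A t)"
            unfolding setdist_d_def by (rule cSUP_upper) (use x pt in \<open>auto intro!: bdd_aboveI2[where M="\<epsilon>/2"]\<close>)
          then show ?thesis using infdist_nonneg order_trans by blast
        qed
        then show "dist (setdist_d (\<Phi> t s ` U) (A t)) 0 < \<epsilon>" using sup e by (simp add: dist_real_def)
      qed
      then show "eventually (\<lambda>s. dist (setdist_d (\<Phi> t s ` U) (A t)) 0 < \<epsilon>) at_bot"
        unfolding eventually_at_bot_linorder by blast
    qed
  qed
  have ULsub: "upper_backward_limit A \<subseteq> Am"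
  proof
    fix x assume x: "x \<in> upper_backward_limit A"
    have le: "infdist x Am \<le> 0 + \<epsilon>" if e: "\<epsilon> > 0" for \<epsilon>
    proof -
      obtain Le where Le: "\<forall>y\<in>K. \<forall>\<tau>\<ge>Le. infdist (\<phi>m \<tau> y) Am < \<epsilon>/2" using UA[of "\<epsilon>/2"] e by auto
      define L' where "L' = max Le 0"
      have L': "L' \<ge> 0" "L' \<ge> Le" unfolding L'_def by auto
      obtain T1 where T1: "\<forall>s\<le>T1. \<forall>y\<in>K. \<forall>\<tau>\<in>{0..L'+T}. dist (\<Phi> (s+\<tau>) s y) (\<phi>m \<tau> y) < \<epsilon>/2"
        using window[OF Kc, of "L'+T" "\<epsilon>/2"] T e L' by auto
      define \<tau>0 where "\<tau>0 = max 1 (- min T0 T1)"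
      have t0: "\<tau>0 > 0" "-\<tau>0 \<le> T0" "-\<tau>0 \<le> T1" unfolding \<tau>0_def by auto
      have sub: "A t \<subseteq> {x. infdist x Am \<le> \<epsilon>}" if t: "t \<le> -\<tau>0" for t
      proof -
        define s where "s = t - L'"
        have sT: "s \<le> T0" unfolding s_def using t t0 L' by auto
        have img: "\<Phi> t T0 ` (\<Union>s'\<in>{..s}. \<Phi> T0 s' ` K) \<subseteq> {x. infdist x Am \<le> \<epsilon>}"
        proof
          fix w assume "w \<in> \<Phi> t T0 ` (\<Union>s'\<in>{..s}. \<Phi> T0 s' ` K)"
          then obtain s' y where s': "s' \<in> {..s}" and y: "y \<in> K" and w: "w = \<Phi> t T0 (\<Phi> T0 s' y)" by blast
          have "\<exists>z\<in>K. \<exists>\<tau>. L' \<le> \<tau> \<and> \<tau> \<le> L' + T \<and> \<Phi> t s' y = \<Phi> t (t - \<tau>) z"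
            by (rule reduce) (use s' y L' t t0 in \<open>auto simp: s_def\<close>)
          then obtain z \<tau> where z: "z \<in> K" "L' \<le> \<tau>" "\<tau> \<le> L' + T" "\<Phi> t s' y = \<Phi> t (t - \<tau>) z" by blast
          have "dist (\<Phi> (t - \<tau> + \<tau>) (t - \<tau>) z) (\<phi>m \<tau> z) < \<epsilon>/2"
            using T1[rule_format, of "t - \<tau>" z \<tau>] z t t0 L' by auto
          then have d1: "dist (\<Phi> t s' y) (\<phi>m \<tau> z) < \<epsilon>/2" using z by simp
          have d2: "infdist (\<phi>m \<tau> z) Am < \<epsilon>/2" using Le z L' by auto
          have "infdist (\<Phi> t s' y) Am \<le> infdist (\<phi>m \<tau> z) Am + dist (\<Phi> t s' y) (\<phi>m \<tau> z)"
            by (rule infdist_triangle)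
          then show "w \<in> {x. infdist x Am \<le> \<epsilon>}" using d1 d2 w by (simp add: cocycle)
        qed
        have "\<Phi> t T0 ` D s \<subseteq> {x. infdist x Am \<le> \<epsilon>}" unfolding D_def
          by (rule image_closure_subset[OF continuous_on_subset[OF contPhi] clK img]) simp
        then show ?thesis unfolding A_def using AstD[OF sT] by blast
      qed
      have "x \<in> closure (\<Union>t\<in>{..-\<tau>0}. A t)" using x t0 unfolding upper_backward_limit_def by auto
      also have "\<dots> \<subseteq> {x. infdist x Am \<le> \<epsilon>}" by (rule closure_minimal) (use sub clK in auto)
      finally show ?thesis by simp
    qed
    have "infdist x Am \<le> 0" by (rule field_le_epsilon) (rule le)
    then have "infdist x Am = 0" using infdist_nonneg[of x Am] by linarith
    then show "x \<in> Am" using in_closed_iff_infdist_zero[OF compact_imp_closed[OF Am(2)] Am(1)] by simp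
  qed
  have ex: "\<exists>U. bounded U \<and> open U \<and> upper_backward_limit A \<subseteq> U \<and>
        (\<forall>t. ((\<lambda>s. setdist_d (\<Phi> t s ` U) (A t)) \<longlongrightarrow> 0) at_bot)"
    apply (rule exI[of _ U])
    using Ub Uo ULsub AmU attract by blast
  have "local_pullback_attractor \<Phi> A"
    unfolding local_pullback_attractor_def
    using A1 A2 ex by blast
  then show ?thesis using ULsub by blast
qed

end


theorem theorem2p2:
  fixes f :: "'a::euclidean_space \<Rightarrow> real \<Rightarrow> 'a"
    and \<Lambda> :: "real \<Rightarrow> real"
    and lm lp r :: real
    and \<Phi> :: "real \<Rightarrow> real \<Rightarrow> 'a \<Rightarrow> 'a"
    and \<phi>m :: "real \<Rightarrow> 'a \<Rightarrow> 'a"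
    and Am :: "'a set"
  assumes "C1_fun2 f"
    and "lm < lp"
    and "parameter_shift \<Lambda> lm lp"
    and "r > 0"
    and "is_solution_cocycle f \<Lambda> r \<Phi>"
    and "is_autonomous_flow f lm \<phi>m"
    and "asymptotically_stable \<phi>m Am"
  shows "\<exists>A. local_pullback_attractor \<Phi> A \<and> upper_backward_limit A \<subseteq> Am"
proof -
  interpret setting f \<Lambda> lm lp r \<Phi> \<phi>m Am
    by (unfold_locales) (rule assms)+
  show ?thesis by (rule main)
qed

end
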